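(* Let $a\in\mathbb{C}\setminus\{0\}$, let $\omega$ be a valid weight, and let $V_a=M_{a-z}^*M_{a-z}$ act on $H^2_\omega$. Then $\sigma_{\mathrm p}(V_a)\subset(0,\infty)$.
   Context: A weight $\omega=\{\omega_n\}_{n\ge0}$ is called valid if it is a monotonic sequence of positive numbers with $\omega_0=1$, $\lim_{n\to\infty}\omega_{n+1}/\omega_n=1$ and $\sum_{n=0}^\infty(1-\omega_{n+1}/\omega_n)^2<\infty$. The weighted Hardy space $H^2_\omega$ is the Hilbert space of holomorphic functions $f(z)=\sum_{n\ge0}a_nz^n$ on the unit disc with $\|f\|_\omega^2=\sum_{n\ge0}|a_n|^2\omega_n<\infty$. $M_{a-z}$ denotes multiplication by $a-z$ on $H^2_\omega$ and $M_{a-z}^*$ its adjoint. $\sigma_{\mathrm p}$ denotes the point spectrum. *)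

theory Defs
  imports "HOL-Analysis.Analysis"
begin

definition valid_weight :: "(nat \<Rightarrow> real) \<Rightarrow> bool" where
  "valid_weight \<omega> \<longleftrightarrow>
     (mono \<omega> \<or> antimono \<omega>) \<and> (\<forall>n. \<omega> n > 0) \<and> \<omega> 0 = 1 \<and>
     (\<lambda>n. \<omega> (Suc n) / \<omega> n) \<longlonglongrightarrow> 1 \<and>
     summable (\<lambda>n. (1 - \<omega> (Suc n) / \<omega> n)\<^sup>2)"

text \<open>The weighted Hardy space, identified with the space of Taylor coefficient
  sequences f(z) = sum_n c n * z^n of its elements.\<close>
definition H2 :: "(nat \<Rightarrow> real) \<Rightarrow> (nat \<Rightarrow> complex) set" where
  "H2 \<omega> = {c. summable (\<lambda>n. (cmod (c n))\<^sup>2 * \<omega> n)}"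

definition winner :: "(nat \<Rightarrow> real) \<Rightarrow> (nat \<Rightarrow> complex) \<Rightarrow> (nat \<Rightarrow> complex) \<Rightarrow> complex" where
  "winner \<omega> f g = (\<Sum>n. f n * cnj (g n) * complex_of_real (\<omega> n))"

definition mult_az :: "complex \<Rightarrow> (nat \<Rightarrow> complex) \<Rightarrow> (nat \<Rightarrow> complex)" where
  "mult_az a c = (\<lambda>n. a * c n - (if n = 0 then 0 else c (n - 1)))"

definition hadjoint :: "(nat \<Rightarrow> real) \<Rightarrow> ((nat \<Rightarrow> complex) \<Rightarrow> (nat \<Rightarrow> complex))
    \<Rightarrow> (nat \<Rightarrow> complex) \<Rightarrow> (nat \<Rightarrow> complex)" where
  "hadjoint \<omega> T h = (THE k. k \<in> H2 \<omega> \<and> (\<forall>g \<in> H2 \<omega>. winner \<omega> k g = winner \<omega> h (T g)))"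

definition Va :: "(nat \<Rightarrow> real) \<Rightarrow> complex \<Rightarrow> (nat \<Rightarrow> complex) \<Rightarrow> (nat \<Rightarrow> complex)" where
  "Va \<omega> a = hadjoint \<omega> (mult_az a) \<circ> mult_az a"

definition point_spectrum :: "(nat \<Rightarrow> real) \<Rightarrow> ((nat \<Rightarrow> complex) \<Rightarrow> (nat \<Rightarrow> complex)) \<Rightarrow> complex set" where
  "point_spectrum \<omega> T = {\<mu>. \<exists>f \<in> H2 \<omega>. f \<noteq> (\<lambda>_. 0) \<and> T f = (\<lambda>n. \<mu> * f n)}"

end

theory Submission
  imports Defs
begin

lemma sq_ineq: "(cmod (x + y))\<^sup>2 \<le> 2 * (cmod x)\<^sup>2 + 2 * (cmod y)\<^sup>2"
proof -
  have "cmod (x+y) \<le> cmod x + cmod y" by (rule norm_triangle_ineq)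
  hence "(cmod (x+y))^2 \<le> (cmod x + cmod y)^2" by (simp add: power_mono)
  also have "\<dots> \<le> 2 * (cmod x)\<^sup>2 + 2 * (cmod y)\<^sup>2"
    using zero_le_power2[of "cmod x - cmod y"] by (simp add: power2_eq_square algebra_simps)
  finally show ?thesis .
qed

lemma H2_add:
  assumes pos: "\<And>n. \<omega> n > 0" and f: "f \<in> H2 \<omega>" and g: "g \<in> H2 \<omega>"
  shows "(\<lambda>n. f n + g n) \<in> H2 \<omega>"
proof -
  have sf: "summable (\<lambda>n. (cmod (f n))\<^sup>2 * \<omega> n)" using f by (simp add: H2_def)
  have sg: "summable (\<lambda>n. (cmod (g n))\<^sup>2 * \<omega> n)" using g by (simp add: H2_def)
  have s: "summable (\<lambda>n. 2 * ((cmod (f n))\<^sup>2 * \<omega> n) + 2 * ((cmod (g n))\<^sup>2 * \<omega> n))"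
    using sf sg by (intro summable_add summable_mult)
  have "summable (\<lambda>n. (cmod (f n + g n))\<^sup>2 * \<omega> n)"
  proof (rule summable_comparison_test'[OF s])
    fix n
    have "(cmod (f n + g n))\<^sup>2 * \<omega> n \<le> (2 * (cmod (f n))\<^sup>2 + 2 * (cmod (g n))\<^sup>2) * \<omega> n"
      using pos[of n] sq_ineq by (intro mult_right_mono) auto
    then show "norm ((cmod (f n + g n))\<^sup>2 * \<omega> n) \<le> 2 * ((cmod (f n))\<^sup>2 * \<omega> n) + 2 * ((cmod (g n))\<^sup>2 * \<omega> n)"
      using pos[of n] by (simp add: algebra_simps)
  qed
  then show ?thesis by (simp add: H2_def)
qed

lemma H2_scale:
  assumes f: "f \<in> H2 \<omega>"
  shows "(\<lambda>n. c * f n) \<in> H2 \<omega>"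
proof -
  have sf: "summable (\<lambda>n. (cmod (f n))\<^sup>2 * \<omega> n)" using f by (simp add: H2_def)
  have "summable (\<lambda>n. (cmod c)\<^sup>2 * ((cmod (f n))\<^sup>2 * \<omega> n))"
    using sf by (rule summable_mult)
  then show ?thesis by (simp add: H2_def norm_mult power_mult_distrib mult.assoc)
qed

lemma H2_diff:
  assumes pos: "\<And>n. \<omega> n > 0" and f: "f \<in> H2 \<omega>" and g: "g \<in> H2 \<omega>"
  shows "(\<lambda>n. f n - g n) \<in> H2 \<omega>"
proof -
  have "(\<lambda>n. f n + (-1) * g n) \<in> H2 \<omega>"
    using H2_add[where \<omega>=\<omega>, OF pos f H2_scale[OF g, of "-1"]] by simp
  then show ?thesis by simp
qed

definition shiftS :: "(nat \<Rightarrow> complex) \<Rightarrow> nat \<Rightarrow> complex" where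
  "shiftS g n = (if n = 0 then 0 else g (n - 1))"

definition backB :: "(nat \<Rightarrow> real) \<Rightarrow> (nat \<Rightarrow> complex) \<Rightarrow> nat \<Rightarrow> complex" where
  "backB \<omega> h n = h (Suc n) * complex_of_real (\<omega> (Suc n) / \<omega> n)"

lemma H2_shift:
  assumes pos: "\<And>n. \<omega> n > 0" and C: "\<And>n. \<omega> (Suc n) \<le> C * \<omega> n" and g: "g \<in> H2 \<omega>"
  shows "shiftS g \<in> H2 \<omega>"
proof -
  have sg: "summable (\<lambda>n. C * ((cmod (g n))\<^sup>2 * \<omega> n))" using g by (simp add: H2_def summable_mult)
  have "summable (\<lambda>n. (cmod (shiftS g (Suc n)))\<^sup>2 * \<omega> (Suc n))"
  proof (rule summable_comparison_test'[OF sg])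
    fix n
    have "(cmod (g n))\<^sup>2 * \<omega> (Suc n) \<le> (cmod (g n))\<^sup>2 * (C * \<omega> n)"
      using C[of n] by (intro mult_left_mono) auto
    then show "norm ((cmod (shiftS g (Suc n)))\<^sup>2 * \<omega> (Suc n)) \<le> C * ((cmod (g n))\<^sup>2 * \<omega> n)"
      using pos[of "Suc n"] by (simp add: shiftS_def algebra_simps)
  qed
  then show ?thesis unfolding H2_def
    using summable_Suc_iff[of "\<lambda>n. (cmod (shiftS g n))\<^sup>2 * \<omega> n"] by simp
qed

lemma H2_back:
  assumes pos: "\<And>n. \<omega> n > 0" and C: "\<And>n. \<omega> (Suc n) \<le> C * \<omega> n" and h: "h \<in> H2 \<omega>"
  shows "backB \<omega> h \<in> H2 \<omega>"
proof -
  have sh0: "summable (\<lambda>n. (cmod (h n))\<^sup>2 * \<omega> n)" using h by (simp add: H2_def)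
  have sh: "summable (\<lambda>n. C * ((cmod (h (Suc n)))\<^sup>2 * \<omega> (Suc n)))"
    using sh0 summable_Suc_iff[of "\<lambda>n. (cmod (h n))\<^sup>2 * \<omega> n"] by (simp add: summable_mult)
  have "summable (\<lambda>n. (cmod (backB \<omega> h n))\<^sup>2 * \<omega> n)"
  proof (rule summable_comparison_test'[OF sh])
    fix n
    have e: "(cmod (backB \<omega> h n))\<^sup>2 * \<omega> n = (cmod (h (Suc n)))\<^sup>2 * \<omega> (Suc n) * (\<omega> (Suc n) / \<omega> n)"
      using pos[of n] pos[of "Suc n"]
      by (simp add: backB_def norm_mult norm_divide power_mult_distrib power2_eq_square field_simps)
    have "(\<omega> (Suc n) / \<omega> n) \<le> C" using C[of n] pos[of n] by (simp add: divide_le_eq)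
    then have "(cmod (h (Suc n)))\<^sup>2 * \<omega> (Suc n) * (\<omega> (Suc n) / \<omega> n) \<le> (cmod (h (Suc n)))\<^sup>2 * \<omega> (Suc n) * C"
      using pos[of "Suc n"] by (intro mult_left_mono) auto
    moreover have "0 \<le> (cmod (backB \<omega> h n))\<^sup>2 * \<omega> n" using pos[of n] by simp
    ultimately show "norm ((cmod (backB \<omega> h n))\<^sup>2 * \<omega> n) \<le> C * ((cmod (h (Suc n)))\<^sup>2 * \<omega> (Suc n))"
      using e by (simp only: real_norm_def abs_of_nonneg) (simp add: algebra_simps)
  qed
  then show ?thesis by (simp add: H2_def)
qed

lemma prod_summable:
  assumes pos: "\<And>n. \<omega> n > 0" and f: "f \<in> H2 \<omega>" and g: "g \<in> H2 \<omega>"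
  shows "summable (\<lambda>n. f n * cnj (g n) * complex_of_real (\<omega> n))"
proof -
  have sf: "summable (\<lambda>n. (cmod (f n))\<^sup>2 * \<omega> n)" using f by (simp add: H2_def)
  have sg: "summable (\<lambda>n. (cmod (g n))\<^sup>2 * \<omega> n)" using g by (simp add: H2_def)
  have s: "summable (\<lambda>n. (cmod (f n))\<^sup>2 * \<omega> n + (cmod (g n))\<^sup>2 * \<omega> n)"
    using sf sg by (rule summable_add)
  have "summable (\<lambda>n. norm (f n * cnj (g n) * complex_of_real (\<omega> n)))"
  proof (rule summable_comparison_test'[OF s])
    fix n
    have "cmod (f n) * cmod (g n) \<le> (cmod (f n))\<^sup>2 + (cmod (g n))\<^sup>2"
      using zero_le_power2[of "cmod (f n) - cmod (g n)"]
      by (simp add: power2_eq_square algebra_simps)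
         (smt (verit) mult_nonneg_nonneg norm_ge_zero)
    then have "cmod (f n) * cmod (g n) * \<omega> n \<le> ((cmod (f n))\<^sup>2 + (cmod (g n))\<^sup>2) * \<omega> n"
      using pos[of n] by (intro mult_right_mono) auto
    then show "norm (norm (f n * cnj (g n) * complex_of_real (\<omega> n))) \<le> (cmod (f n))\<^sup>2 * \<omega> n + (cmod (g n))\<^sup>2 * \<omega> n"
      using pos[of n] by (simp add: norm_mult algebra_simps)
  qed
  then show ?thesis by (rule summable_norm_cancel)
qed

lemma winner_self:
  assumes "x \<in> H2 \<omega>"
  shows "winner \<omega> x x = complex_of_real (\<Sum>n. (cmod (x n))\<^sup>2 * \<omega> n)"
proof -
  have s: "summable (\<lambda>n. (cmod (x n))\<^sup>2 * \<omega> n)" using assms by (simp add: H2_def)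
  have "winner \<omega> x x = (\<Sum>n. complex_of_real ((cmod (x n))\<^sup>2 * \<omega> n))"
    unfolding winner_def by (simp only: complex_norm_square of_real_mult)
  also have "\<dots> = complex_of_real (\<Sum>n. (cmod (x n))\<^sup>2 * \<omega> n)"
    using s by (simp add: suminf_of_real)
  finally show ?thesis .
qed

lemma norm_pos:
  assumes pos: "\<And>n. \<omega> n > 0" and "x \<in> H2 \<omega>" and "x \<noteq> (\<lambda>_. 0)"
  shows "(\<Sum>n. (cmod (x n))\<^sup>2 * \<omega> n) > 0"
proof -
  have s: "summable (\<lambda>n. (cmod (x n))\<^sup>2 * \<omega> n)" using assms by (simp add: H2_def)
  obtain i where "x i \<noteq> 0" using assms(3) by auto
  then have "(cmod (x i))\<^sup>2 * \<omega> i > 0" using pos[of i] by simp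
  then show ?thesis
  proof -
    have nn: "\<forall>n. 0 \<le> (cmod (x n))\<^sup>2 * \<omega> n" using pos by (simp add: less_imp_le)
    show ?thesis using suminf_pos_iff[OF s nn[rule_format]] \<open>(cmod (x i))\<^sup>2 * \<omega> i > 0\<close> by blast
  qed
qed

lemma winner_diff_left:
  assumes pos: "\<And>n. \<omega> n > 0" and "x \<in> H2 \<omega>" "y \<in> H2 \<omega>" "g \<in> H2 \<omega>"
  shows "winner \<omega> (\<lambda>n. x n - y n) g = winner \<omega> x g - winner \<omega> y g"
proof -
  have "(\<lambda>n. (x n - y n) * cnj (g n) * complex_of_real (\<omega> n)) =
    (\<lambda>n. x n * cnj (g n) * complex_of_real (\<omega> n) - y n * cnj (g n) * complex_of_real (\<omega> n))"
    by (simp add: fun_eq_iff algebra_simps)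
  then show ?thesis unfolding winner_def
    using suminf_diff[OF prod_summable[where \<omega>=\<omega>, OF pos assms(2,4)] prod_summable[where \<omega>=\<omega>, OF pos assms(3,4)]]
    by simp
qed

lemma winner_scale_left:
  assumes pos: "\<And>n. \<omega> n > 0" and "x \<in> H2 \<omega>" "g \<in> H2 \<omega>"
  shows "winner \<omega> (\<lambda>n. c * x n) g = c * winner \<omega> x g"
  unfolding winner_def
  using prod_summable[where \<omega>=\<omega>, OF pos assms(2,3)]
  by (subst suminf_mult[symmetric]) (auto simp: algebra_simps)

lemma hadjoint_eq:
  assumes pos: "\<And>n. \<omega> n > 0" and k: "k \<in> H2 \<omega>"
    and adj: "\<forall>g \<in> H2 \<omega>. winner \<omega> k g = winner \<omega> h (T g)"
  shows "hadjoint \<omega> T h = k"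
  unfolding hadjoint_def
proof (rule the_equality)
  show "k \<in> H2 \<omega> \<and> (\<forall>g\<in>H2 \<omega>. winner \<omega> k g = winner \<omega> h (T g))" using k adj by blast
next
  fix k' assume k': "k' \<in> H2 \<omega> \<and> (\<forall>g\<in>H2 \<omega>. winner \<omega> k' g = winner \<omega> h (T g))"
  define d where "d = (\<lambda>n. k' n - k n)"
  have d: "d \<in> H2 \<omega>" unfolding d_def using H2_diff[where \<omega>=\<omega>, OF pos] k k' by blast
  have "winner \<omega> d d = winner \<omega> k' d - winner \<omega> k d"
    unfolding d_def using winner_diff_left[where \<omega>=\<omega>, OF pos] k k' d d_def by blast
  also have "\<dots> = 0" using k' adj d by simp
  finally have "complex_of_real (\<Sum>n. (cmod (d n))\<^sup>2 * \<omega> n) = 0"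
    using winner_self[OF d] by simp
  then have z: "(\<Sum>n. (cmod (d n))\<^sup>2 * \<omega> n) = 0" by simp
  have "\<forall>n. (cmod (d n))\<^sup>2 * \<omega> n = 0"
  proof -
    have nn: "\<forall>n. 0 \<le> (cmod (d n))\<^sup>2 * \<omega> n" using pos by (simp add: less_imp_le)
    show ?thesis using z suminf_eq_zero_iff[of "\<lambda>n. (cmod (d n))\<^sup>2 * \<omega> n"] d nn by (simp add: H2_def)
  qed
  then have "\<forall>n. d n = 0" using pos by (metis less_irrefl mult_eq_0_iff norm_eq_zero zero_eq_power2)
  then show "k' = k" unfolding d_def by auto
qed

lemma winner_back_shift:
  assumes pos: "\<And>n. \<omega> n > 0" and C: "\<And>n. \<omega> (Suc n) \<le> C * \<omega> n"
    and h: "h \<in> H2 \<omega>" and g: "g \<in> H2 \<omega>"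
  shows "winner \<omega> (backB \<omega> h) g = winner \<omega> h (shiftS g)"
proof -
  define T where "T = (\<lambda>n. h n * cnj (shiftS g n) * complex_of_real (\<omega> n))"
  have sT: "summable T" unfolding T_def using prod_summable[where \<omega>=\<omega>, OF pos h H2_shift[where \<omega>=\<omega>, OF pos C g]] .
  have "winner \<omega> (backB \<omega> h) g = (\<Sum>n. T (Suc n))"
    unfolding winner_def T_def
  proof (rule arg_cong[where f=suminf], rule ext)
    fix n
    show "backB \<omega> h n * cnj (g n) * complex_of_real (\<omega> n) =
      h (Suc n) * cnj (shiftS g (Suc n)) * complex_of_real (\<omega> (Suc n))"
      using pos[of n] by (simp add: backB_def shiftS_def field_simps of_real_divide)
  qed
  also have "\<dots> = suminf T - T 0" using sT by (rule suminf_split_head)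
  also have "\<dots> = winner \<omega> h (shiftS g)" by (simp add: T_def shiftS_def winner_def)
  finally show ?thesis .
qed

lemma mult_az_eq: "mult_az a g = (\<lambda>n. a * g n - shiftS g n)"
  by (simp add: mult_az_def shiftS_def fun_eq_iff)

lemma adjoint_prop:
  assumes pos: "\<And>n. \<omega> n > 0" and C: "\<And>n. \<omega> (Suc n) \<le> C * \<omega> n"
    and h: "h \<in> H2 \<omega>"
  shows "(\<lambda>n. cnj a * h n - backB \<omega> h n) \<in> H2 \<omega> \<and>
    (\<forall>g\<in>H2 \<omega>. winner \<omega> (\<lambda>n. cnj a * h n - backB \<omega> h n) g = winner \<omega> h (mult_az a g))"
proof
  show "(\<lambda>n. cnj a * h n - backB \<omega> h n) \<in> H2 \<omega>"
    by (rule H2_diff[where \<omega>=\<omega>, OF pos H2_scale[OF h] H2_back[where \<omega>=\<omega>, OF pos C h]])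
  show "\<forall>g\<in>H2 \<omega>. winner \<omega> (\<lambda>n. cnj a * h n - backB \<omega> h n) g = winner \<omega> h (mult_az a g)"
  proof
    fix g assume g: "g \<in> H2 \<omega>"
    have sS: "shiftS g \<in> H2 \<omega>" by (rule H2_shift[where \<omega>=\<omega>, OF pos C g])
    have L: "winner \<omega> (\<lambda>n. cnj a * h n - backB \<omega> h n) g = cnj a * winner \<omega> h g - winner \<omega> h (shiftS g)"
      using winner_diff_left[where \<omega>=\<omega>, OF pos H2_scale[OF h] H2_back[where \<omega>=\<omega>, OF pos C h] g]
        winner_scale_left[where \<omega>=\<omega>, OF pos h g] winner_back_shift[where \<omega>=\<omega>, OF pos C h g] by simp
    have "winner \<omega> h (mult_az a g) = (\<Sum>n. cnj a * (h n * cnj (g n) * complex_of_real (\<omega> n))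
         - h n * cnj (shiftS g n) * complex_of_real (\<omega> n))"
      unfolding winner_def mult_az_eq by (simp add: algebra_simps)
    also have "\<dots> = cnj a * winner \<omega> h g - winner \<omega> h (shiftS g)"
      unfolding winner_def
      using suminf_diff[OF summable_mult[OF prod_summable[where \<omega>=\<omega>, OF pos h g], of "cnj a"] prod_summable[where \<omega>=\<omega>, OF pos h sS]]
        suminf_mult[OF prod_summable[where \<omega>=\<omega>, OF pos h g], of "cnj a"]
      by simp
    finally show "winner \<omega> (\<lambda>n. cnj a * h n - backB \<omega> h n) g = winner \<omega> h (mult_az a g)"
      using L by simp
  qed
qed

lemma adjoint_formula:
  assumes pos: "\<And>n. \<omega> n > 0" and C: "\<And>n. \<omega> (Suc n) \<le> C * \<omega> n"
    and h: "h \<in> H2 \<omega>"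
  shows "hadjoint \<omega> (mult_az a) h = (\<lambda>n. cnj a * h n - backB \<omega> h n)"
  using adjoint_prop[where \<omega>=\<omega>, OF pos C h, of a] hadjoint_eq[where \<omega>=\<omega>, OF pos] by blast

lemma mult_az_inj:
  assumes "a \<noteq> 0" and "mult_az a f = (\<lambda>_. 0)"
  shows "f = (\<lambda>_. 0)"
proof -
  have e: "\<And>n. a * f n - (if n = 0 then 0 else f (n - 1)) = 0"
    using assms(2) unfolding mult_az_def by meson
  have "f n = 0" for n
  proof (induction n)
    case 0 then show ?case using e[of 0] assms(1) by simp
  next
    case (Suc n) then show ?case using e[of "Suc n"] assms(1) by simp
  qed
  then show ?thesis by auto
qed

theorem corollary4p2:
  fixes a :: complex and \<omega> :: "nat \<Rightarrow> real"
  assumes "a \<noteq> 0" and "valid_weight \<omega>"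
  shows "point_spectrum \<omega> (Va \<omega> a) \<subseteq> complex_of_real ` {0<..}"
proof
  have pos: "\<And>n. \<omega> n > 0" using assms(2) by (simp add: valid_weight_def)
  have lim: "(\<lambda>n. \<omega> (Suc n) / \<omega> n) \<longlonglongrightarrow> 1" using assms(2) by (simp add: valid_weight_def)
  then have "Bseq (\<lambda>n. \<omega> (Suc n) / \<omega> n)" by (rule convergent_imp_Bseq[OF convergentI])
  then obtain C where C0: "C > 0" and Cb: "\<forall>n. norm (\<omega> (Suc n) / \<omega> n) \<le> C" by (rule BseqE)
  have C: "\<omega> (Suc n) \<le> C * \<omega> n" for n
    using Cb[rule_format, of n] pos[of n] pos[of "Suc n"] by (simp add: divide_le_eq)
  fix \<mu> assume "\<mu> \<in> point_spectrum \<omega> (Va \<omega> a)"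
  then obtain f where f: "f \<in> H2 \<omega>" and fne: "f \<noteq> (\<lambda>_. 0)" and ev: "Va \<omega> a f = (\<lambda>n. \<mu> * f n)"
    unfolding point_spectrum_def by blast
  define h where "h = mult_az a f"
  have h: "h \<in> H2 \<omega>" unfolding h_def mult_az_eq
    by (rule H2_diff[where \<omega>=\<omega>, OF pos H2_scale[OF f] H2_shift[where \<omega>=\<omega>, OF pos C f]])
  have hne: "h \<noteq> (\<lambda>_. 0)" using mult_az_inj[OF assms(1), of f] fne unfolding h_def by blast
  define k where "k = (\<lambda>n. cnj a * h n - backB \<omega> h n)"
  have "Va \<omega> a f = k" unfolding Va_def k_def h_def using adjoint_formula[where \<omega>=\<omega>, OF pos C h, of a] h_def by simp
  then have kf: "k = (\<lambda>n. \<mu> * f n)" using ev by simp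
  have "winner \<omega> k f = winner \<omega> h (mult_az a f)"
    using adjoint_prop[where \<omega>=\<omega>, OF pos C h, of a] f unfolding k_def by blast
  also have "\<dots> = complex_of_real (\<Sum>n. (cmod (h n))\<^sup>2 * \<omega> n)"
    using winner_self[OF h] h_def by simp
  finally have A: "winner \<omega> k f = complex_of_real (\<Sum>n. (cmod (h n))\<^sup>2 * \<omega> n)" .
  have "winner \<omega> k f = \<mu> * winner \<omega> f f" using kf winner_scale_left[where \<omega>=\<omega>, OF pos f f] by simp
  also have "\<dots> = \<mu> * complex_of_real (\<Sum>n. (cmod (f n))\<^sup>2 * \<omega> n)" using winner_self[OF f] by simp
  finally have B: "\<mu> * complex_of_real (\<Sum>n. (cmod (f n))\<^sup>2 * \<omega> n) = complex_of_real (\<Sum>n. (cmod (h n))\<^sup>2 * \<omega> n)"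
    using A by simp
  have pf: "(\<Sum>n. (cmod (f n))\<^sup>2 * \<omega> n) > 0" by (rule norm_pos[where \<omega>=\<omega>, OF pos f fne])
  have ph: "(\<Sum>n. (cmod (h n))\<^sup>2 * \<omega> n) > 0" by (rule norm_pos[where \<omega>=\<omega>, OF pos h hne])
  have "\<mu> = complex_of_real ((\<Sum>n. (cmod (h n))\<^sup>2 * \<omega> n) / (\<Sum>n. (cmod (f n))\<^sup>2 * \<omega> n))"
    using B pf by (simp add: field_simps of_real_divide)
  then show "\<mu> \<in> complex_of_real ` {0<..}" using pf ph by (intro image_eqI[where x="(\<Sum>n. (cmod (h n))\<^sup>2 * \<omega> n) / (\<Sum>n. (cmod (f n))\<^sup>2 * \<omega> n)"]) (auto simp: of_real_divide)
qed

end
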